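(* In the single-block Spice setting, fix an iteration $k$ and let $w^*=(x^*,\lambda^* )\in\Omega$ satisfy $\rho[f(x)-f(x^* )]+(w-w^* )^\top\frac{1}{\eta_k}\Gamma(w^* )\ge 0$ for all $w\in\Omega$. Then $$\|w^*-w^k\|_{H_k}^2\ \ge\ \|w^*-w^{k+1}\|_{H_k}^2+\|w^k-\bar w^k\|_{G_k}^2 .$$
   Context: Single-block Spice setting. Let $\mathcal{X}\subseteq\mathbb{R}^n$ be nonempty closed convex, $f:\mathbb{R}^n\to\mathbb{R}$ convex, $\phi_1,\dots,\phi_p:\mathbb{R}^n\to\mathbb{R}$ convex and continuously differentiable, $\Phi(x)=(\phi_1(x),\dots,\phi_p(x))^\top$, $\mathcal{D}\Phi(x)\in\mathbb{R}^{p\times n}$ its Jacobian. Let $\mathcal{Z}=\mathbb{R}^p_+$, $\Omega=\mathcal{X}\times\mathcal{Z}$, $w=(x,\lambda)$, $\Gamma(w)=(\mathcal{D}\Phi(x)^\top\lambda,\,-\Phi(x))$. For a symmetric matrix $A$, $\|v\|_A^2:=v^\top A v$; the norm of a matrix is the spectral norm; $\mathsf{R}(x):=\|\mathcal{D}\Phi(x)\|^2$. The scaled Lagrangian is $\mathcal{L}(x,\lambda,\rho,\eta)=\rho f(x)+\frac1\eta\lambda^\top\Phi(x)$. Fix $\rho>0$, $\mu>1$, a starting point $w^0=(x^0,\lambda^0)\in\Omega$ and positive numbers $\eta_0,\eta_1,\dots$. Given $w^k=(x^k,\lambda^k)\in\Omega$, iteration $k$ is: $r_k=\frac{1}{\eta_k}\sqrt{\mathsf{R}(x^k)}$;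 $\bar x^k=\arg\min_{x\in\mathcal{X}}\{\mathcal{L}(x,\lambda^k,\rho,\eta_k)+\frac{r_k}{2}\|x-x^k\|^2\}$; $s_k=\frac{\mu\,\mathsf{R}(\bar x^k)}{\eta_k\sqrt{\mathsf{R}(x^k)}}$; $\bar\lambda^k=\arg\max_{\lambda\in\mathcal{Z}}\{\mathcal{L}(\bar x^k,\lambda,\rho,\eta_k)-\frac{s_k}{2}\|\lambda-\lambda^k\|^2\}$ (equivalently $\bar\lambda^k=\max\{\lambda^k+\frac{1}{\eta_k s_k}\Phi(\bar x^k),0\}$ componentwise); $\bar w^k=(\bar x^k,\bar\lambda^k)$; and $w^{k+1}=w^k-M_k(w^k-\bar w^k)$ where $M_k=\begin{pmatrix}I_n & -\frac{1}{\eta_k r_k}\mathcal{D}\Phi(\bar x^k)^\top\\ 0 & I_p\end{pmatrix}$. It is assumed throughout that $\mathsf{R}(x^k)>0$ and $\mathsf{R}(\bar x^k)>0$ for all $k$. Define $Q_k=\begin{pmatrix} r_kI_n & -\frac{1}{\eta_k}\mathcal{D}\Phi(\bar x^k)^\top\\ 0 & s_kI_p\end{pmatrix}$, $H_k=\begin{pmatrix} r_kI_n&0\\0&s_kI_p\end{pmatrix}$, $G_k=\begin{pmatrix} r_kI_n&0\\0&s_kI_p-\frac{1}{\eta_k^2r_k}\mathcal{D}\Phi(\bar x^k)\mathcal{D}\Phi(\bar x^k)^\top\end{pmatrix}$. *)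

theory Defs
  imports "HOL-Analysis.Analysis"
begin

definition spec_norm :: "real^'n^'m \<Rightarrow> real" where
  "spec_norm A = onorm (\<lambda>v. A *v v)"

definition sR :: "(real^'n \<Rightarrow> real^'n^'p) \<Rightarrow> real^'n \<Rightarrow> real" where
  "sR DPhi x = (spec_norm (DPhi x))\<^sup>2"

definition scaledL :: "(real^'n \<Rightarrow> real) \<Rightarrow> (real^'n \<Rightarrow> real^'p) \<Rightarrow> real^'n \<Rightarrow> real^'p \<Rightarrow> real \<Rightarrow> real \<Rightarrow> real" where
  "scaledL f Phi x lam rho eta = rho * f x + (1/eta) * (lam \<bullet> Phi x)"

definition orthant :: "(real^'p) set" where
  "orthant = {l. \<forall>i. 0 \<le> l $ i}"

end

theory Submission
  imports Defs
begin

lemma tr: fixes D :: "real^'n^'m" shows "(D *v x) \<bullet> y = x \<bullet> (transpose D *v y)"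
  by (metis dot_lmul_matrix vector_transpose_matrix)

lemma alg:
  fixes D :: "real^'n^'p" and xk xb xs :: "real^'n" and lamk lamb lams :: "real^'p"
  assumes r: "r > 0" and eta: "eta > 0"
    and T: "0 \<le> r*((xb-xs)\<bullet>(xk-xb)) - (1/eta)*((xb-xs) \<bullet> (transpose D *v (lamk-lamb))) + s*((lamb-lams)\<bullet>(lamk-lamb))"
  shows "r * ((xs - xk) \<bullet> (xs - xk)) + s * ((lams - lamk) \<bullet> (lams - lamk))
        \<ge> r * ((xs - (xk - ((xk - xb) - (1 / (eta * r)) *\<^sub>R (transpose D *v (lamk - lamb))))) \<bullet> (xs - (xk - ((xk - xb) - (1 / (eta * r)) *\<^sub>R (transpose D *v (lamk - lamb))))))
          + s * ((lams - (lamk - (lamk - lamb))) \<bullet> (lams - (lamk - (lamk - lamb))))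
          + (r * ((xk - xb) \<bullet> (xk - xb)) + (lamk - lamb) \<bullet> ((s *\<^sub>R mat 1 - (1 / (eta\<^sup>2 * r)) *\<^sub>R (D ** transpose D)) *v (lamk - lamb)))"
proof -
  define q where "q = xs - xb"
  define a where "a = xk - xb"
  define b where "b = lamk - lamb"
  define m where "m = lams - lamb"
  define u where "u = transpose D *v b"
  define c where "c = 1 / (eta * r)"
  have e1: "xs - (xk - ((xk - xb) - (1 / (eta * r)) *\<^sub>R (transpose D *v (lamk - lamb)))) = q - c *\<^sub>R u"
    unfolding q_def c_def u_def b_def by (simp add: algebra_simps)
  have e2: "lams - (lamk - (lamk - lamb)) = m" unfolding m_def by simp
  have e3: "xs - xk = q - a" "lams - lamk = m - b" unfolding q_def a_def m_def b_def by (simp_all add: algebra_simps)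
  have e4: "(s *\<^sub>R mat 1 - (1 / (eta\<^sup>2 * r)) *\<^sub>R (D ** transpose D)) *v (lamk - lamb)
      = s *\<^sub>R b - (1 / (eta\<^sup>2 * r)) *\<^sub>R (D *v u)"
    unfolding u_def b_def
    by (simp add: matrix_vector_mult_diff_rdistrib matrix_vector_mul_assoc[symmetric] scaleR_matrix_vector_assoc[symmetric] del: transpose_matrix_vector)
  have e5: "b \<bullet> (D *v u) = u \<bullet> u" unfolding u_def by (metis tr inner_commute)
  have e6: "(xb-xs) \<bullet> (transpose D *v (lamk-lamb)) = - (q \<bullet> u)" unfolding q_def u_def b_def
    by (metis inner_minus_left minus_diff_eq)
  have e7: "(xb-xs)\<bullet>(xk-xb) = - (q \<bullet> a)" "(lamb-lams)\<bullet>(lamk-lamb) = - (m \<bullet> b)"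
    unfolding q_def a_def b_def m_def by (metis inner_minus_left minus_diff_eq)+
  have T': "0 \<le> - r*(q\<bullet>a) + (1/eta)*(q\<bullet>u) - s*(m\<bullet>b)" using T unfolding e6 e7 by simp
  have p1: "(xs - xk) \<bullet> (xs - xk) = q\<bullet>q - 2*(q\<bullet>a) + a\<bullet>a"
    unfolding e3 by (simp add: inner_diff_left inner_diff_right inner_commute)
  have p2: "(lams - lamk) \<bullet> (lams - lamk) = m\<bullet>m - 2*(m\<bullet>b) + b\<bullet>b"
    unfolding e3 by (simp add: inner_diff_left inner_diff_right inner_commute)
  have p3: "(q - c *\<^sub>R u) \<bullet> (q - c *\<^sub>R u) = q\<bullet>q - 2*c*(q\<bullet>u) + c*c*(u\<bullet>u)"
    by (simp add: inner_diff_left inner_diff_right inner_commute algebra_simps)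
  have p6: "(lamk - lamb) \<bullet> (s *\<^sub>R b - (1 / (eta\<^sup>2 * r)) *\<^sub>R (D *v u)) = s*(b\<bullet>b) - (1 / (eta\<^sup>2 * r))*(u\<bullet>u)"
    unfolding b_def[symmetric] by (simp add: inner_diff_right e5)
  have cr: "r * c = 1/eta" "r * c * c = 1 / (eta\<^sup>2 * r)" unfolding c_def using r eta
    by (simp_all add: field_simps power2_eq_square)
  have k1: "r*(2*c*(q\<bullet>u)) = 2*(1/eta)*(q\<bullet>u)" proof -
    have "r*(2*c*(q\<bullet>u)) = 2*(r*c)*(q\<bullet>u)" by (simp add: algebra_simps)
    then show ?thesis using cr(1) by simp
  qed
  have k2: "r*(c*c*(u\<bullet>u)) = (1 / (eta\<^sup>2 * r))*(u\<bullet>u)" proof -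
    have "r*(c*c*(u\<bullet>u)) = (r*c*c)*(u\<bullet>u)" by (simp add: algebra_simps)
    then show ?thesis using cr(2) by simp
  qed
  have aa: "(xk - xb) \<bullet> (xk - xb) = a \<bullet> a" by (simp add: a_def)
  show ?thesis unfolding e1 e2 e4 p1 p2 p3 p6 aa
    using T' k1 k2 unfolding ring_distribs by linarith
qed

lemma deriv_bound:
  fixes h :: "'a::real_normed_vector \<Rightarrow> real"
  assumes hd: "(h has_derivative h') (at x)"
    and bd: "\<And>t. 0 < t \<Longrightarrow> t < 1 \<Longrightarrow> h (x + t *\<^sub>R (y - x)) - h x \<le> t * c"
  shows "h' (y - x) \<le> c"
proof -
  let ?g = "\<lambda>t::real. x + t *\<^sub>R (y - x)"
  have gd: "(?g has_derivative (\<lambda>t. t *\<^sub>R (y - x))) (at 0)"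
    by (auto intro!: derivative_eq_intros)
  have hd0: "(h has_derivative h') (at (?g 0))" using hd by simp
  have "((h \<circ> ?g) has_derivative (h' \<circ> (\<lambda>t. t *\<^sub>R (y - x)))) (at 0)"
    by (rule diff_chain_at[OF gd hd0])
  moreover have lin: "linear h'" using hd has_derivative_linear by blast
  have "(h' \<circ> (\<lambda>t. t *\<^sub>R (y - x))) = (\<lambda>t. h' (y - x) * t)"
    using lin by (auto simp: linear_scale mult.commute)
  ultimately have "((h \<circ> ?g) has_field_derivative h' (y - x)) (at 0)"
    by (simp add: has_field_derivative_def)
  hence "((\<lambda>t. ((h \<circ> ?g) t - (h \<circ> ?g) 0) / (t - 0)) \<longlongrightarrow> h' (y - x)) (at 0)"
    using has_field_derivative_iff by blast
  hence lim: "((\<lambda>t. (h (?g t) - h x) / t) \<longlongrightarrow> h' (y - x)) (at_right 0)"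
    by (simp add: filterlim_at_split)
  have ev: "eventually (\<lambda>t. (h (?g t) - h x) / t \<le> c) (at_right (0::real))"
    unfolding eventually_at_right_field
    by (rule exI[of _ 1]) (auto simp: divide_simps bd mult.commute intro: bd[simplified mult.commute])
  show ?thesis
    by (rule tendsto_le[OF _ tendsto_const lim ev]) simp
qed

theorem theorem3p1:
  fixes X :: "(real^'n) set" and f :: "real^'n \<Rightarrow> real"
    and Phi :: "real^'n \<Rightarrow> real^'p" and DPhi :: "real^'n \<Rightarrow> real^'n^'p"
    and rho mu eta :: real
    and xk xb xs :: "real^'n" and lamk lamb lams :: "real^'p"
  assumes X: "closed X" "convex X" "X \<noteq> {}"
    and f_cvx: "convex_on UNIV f"
    and Phi_cvx: "\<And>i. convex_on UNIV (\<lambda>x. Phi x $ i)"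
    and Phi_deriv: "\<And>x. (Phi has_derivative (\<lambda>v. DPhi x *v v)) (at x)"
    and DPhi_cont: "continuous_on UNIV DPhi"
    and rho: "rho > 0" and mu: "mu > 1" and eta: "eta > 0"
    and wk: "xk \<in> X" "lamk \<in> orthant"
    and Rk_pos: "sR DPhi xk > 0" and Rb_pos: "sR DPhi xb > 0"
    and xb_min: "xb \<in> X"
      "\<And>x. x \<in> X \<Longrightarrow>
         scaledL f Phi xb lamk rho eta + ((1/eta) * sqrt (sR DPhi xk)) / 2 * (norm (xb - xk))\<^sup>2
         \<le> scaledL f Phi x lamk rho eta + ((1/eta) * sqrt (sR DPhi xk)) / 2 * (norm (x - xk))\<^sup>2"
    and lamb_max: "lamb \<in> orthant"
      "\<And>lam. lam \<in> orthant \<Longrightarrow>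
         scaledL f Phi xb lam rho eta
           - (mu * sR DPhi xb / (eta * sqrt (sR DPhi xk))) / 2 * (norm (lam - lamk))\<^sup>2
         \<le> scaledL f Phi xb lamb rho eta
           - (mu * sR DPhi xb / (eta * sqrt (sR DPhi xk))) / 2 * (norm (lamb - lamk))\<^sup>2"
    and ws: "xs \<in> X" "lams \<in> orthant"
    and VI: "\<And>x lam. x \<in> X \<Longrightarrow> lam \<in> orthant \<Longrightarrow>
         rho * (f x - f xs) + (x - xs) \<bullet> ((1/eta) *\<^sub>R (transpose (DPhi xs) *v lams))
           + (lam - lams) \<bullet> ((1/eta) *\<^sub>R (- Phi xs)) \<ge> 0"
  shows
    "let r = (1/eta) * sqrt (sR DPhi xk);
         s = mu * sR DPhi xb / (eta * sqrt (sR DPhi xk));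
         D = DPhi xb;
         xk1 = xk - ((xk - xb) - (1 / (eta * r)) *\<^sub>R (transpose D *v (lamk - lamb)));
         lamk1 = lamk - (lamk - lamb);
         Gblk = s *\<^sub>R mat 1 - (1 / (eta\<^sup>2 * r)) *\<^sub>R (D ** transpose D)
     in r * ((xs - xk) \<bullet> (xs - xk)) + s * ((lams - lamk) \<bullet> (lams - lamk))
        \<ge> r * ((xs - xk1) \<bullet> (xs - xk1)) + s * ((lams - lamk1) \<bullet> (lams - lamk1))
          + (r * ((xk - xb) \<bullet> (xk - xb)) + (lamk - lamb) \<bullet> (Gblk *v (lamk - lamb)))"
proof -
  define r where "r = (1/eta) * sqrt (sR DPhi xk)"
  define s where "s = mu * sR DPhi xb / (eta * sqrt (sR DPhi xk))"
  define D where "D = DPhi xb"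
  have sq: "sqrt (sR DPhi xk) > 0" using Rk_pos by simp
  have r: "r > 0" unfolding r_def using sq eta by simp
  have GI: "Phi x $ i + (DPhi x *v (y - x)) $ i \<le> Phi y $ i" for x y i
  proof -
    have hd: "((\<lambda>z. Phi z $ i) has_derivative (\<lambda>v. (DPhi x *v v) $ i)) (at x)"
      by (rule bounded_linear.has_derivative[OF bounded_linear_vec_nth Phi_deriv])
    have "(DPhi x *v (y - x)) $ i \<le> Phi y $ i - Phi x $ i"
    proof (rule deriv_bound[OF hd])
      fix t :: real assume t: "0 < t" "t < 1"
      have e: "x + t *\<^sub>R (y - x) = (1 - t) *\<^sub>R x + t *\<^sub>R y" by (simp add: algebra_simps)
      have "Phi ((1 - t) *\<^sub>R x + t *\<^sub>R y) $ i \<le> (1 - t) * Phi x $ i + t * Phi y $ i"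
        using convex_onD[OF Phi_cvx[of i], of t x y] t by simp
      then show "Phi (x + t *\<^sub>R (y - x)) $ i - Phi x $ i \<le> t * (Phi y $ i - Phi x $ i)"
        unfolding e by (simp add: algebra_simps)
    qed
    then show ?thesis by simp
  qed
  have CV: "0 \<le> lam \<bullet> (Phi y - Phi x - DPhi x *v (y - x))" if "lam \<in> orthant" for lam x y
  proof -
    have "0 \<le> (\<Sum>i\<in>UNIV. lam $ i * (Phi y - Phi x - DPhi x *v (y - x)) $ i)"
    proof (intro sum_nonneg)
      fix i
      have "0 \<le> (Phi y - Phi x - DPhi x *v (y - x)) $ i"
        using GI[where x=x and y=y and i=i] by (simp only: vector_minus_component)
      moreover have "0 \<le> lam $ i" using that unfolding orthant_def by simp
      ultimately show "0 \<le> lam $ i * (Phi y - Phi x - DPhi x *v (y - x)) $ i" by simp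
    qed
    then show ?thesis by (simp add: inner_vec_def)
  qed
  have A: "- ((1/eta) * (lamk \<bullet> (D *v (xs - xb))) + r/2 * ((xs - xb) \<bullet> (xb - xk) + (xb - xk) \<bullet> (xs - xb)))
      \<le> rho * (f xs - f xb)"
  proof (rule deriv_bound[where h = "\<lambda>z. - ((1/eta) * (lamk \<bullet> Phi z) + r/2 * ((z - xk) \<bullet> (z - xk)))"])
    show "((\<lambda>z. - ((1/eta) * (lamk \<bullet> Phi z) + r/2 * ((z - xk) \<bullet> (z - xk)))) has_derivative
       (\<lambda>v. - ((1/eta) * (lamk \<bullet> (D *v v)) + r/2 * (v \<bullet> (xb - xk) + (xb - xk) \<bullet> v)))) (at xb)"
      unfolding D_def
      using eta by (auto intro!: derivative_eq_intros Phi_deriv)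
  next
    fix t :: real assume t: "0 < t" "t < 1"
    define z where "z = xb + t *\<^sub>R (xs - xb)"
    have ez: "z = (1 - t) *\<^sub>R xb + t *\<^sub>R xs" unfolding z_def by (simp add: algebra_simps)
    have zX: "z \<in> X" unfolding ez using X(2) xb_min(1) ws(1) t
      by (simp add: convex_def)
    have m: "scaledL f Phi xb lamk rho eta + r / 2 * (norm (xb - xk))\<^sup>2
         \<le> scaledL f Phi z lamk rho eta + r / 2 * (norm (z - xk))\<^sup>2"
      using xb_min(2)[OF zX] unfolding r_def .
    have fc: "f z \<le> (1 - t) * f xb + t * f xs"
      unfolding ez using convex_onD[OF f_cvx, of t xb xs] t by simp
    have "- ((1/eta) * (lamk \<bullet> Phi z) + r/2 * ((z - xk) \<bullet> (z - xk)))
         - - ((1/eta) * (lamk \<bullet> Phi xb) + r/2 * ((xb - xk) \<bullet> (xb - xk))) \<le> rho * (f z - f xb)"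
      using m unfolding scaledL_def power2_norm_eq_inner by (simp add: algebra_simps)
    also have "\<dots> \<le> t * (rho * (f xs - f xb))"
      using fc rho mult_left_mono[OF _ less_imp_le[OF rho], of "f z - f xb" "t * (f xs - f xb)"]
      by (simp add: algebra_simps)
    finally show "- ((1/eta) * (lamk \<bullet> Phi (xb + t *\<^sub>R (xs - xb))) + r/2 * ((xb + t *\<^sub>R (xs - xb) - xk) \<bullet> (xb + t *\<^sub>R (xs - xb) - xk)))
         - - ((1/eta) * (lamk \<bullet> Phi xb) + r/2 * ((xb - xk) \<bullet> (xb - xk))) \<le> t * (rho * (f xs - f xb))"
      unfolding z_def .
  qed
  have B: "(1/eta) * ((lams - lamb) \<bullet> Phi xb) - s/2 * ((lams - lamb) \<bullet> (lamb - lamk) + (lamb - lamk) \<bullet> (lams - lamb)) \<le> 0"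
  proof (rule deriv_bound[where h = "\<lambda>l. (1/eta) * (l \<bullet> Phi xb) - s/2 * ((l - lamk) \<bullet> (l - lamk))"])
    show "((\<lambda>l. (1/eta) * (l \<bullet> Phi xb) - s/2 * ((l - lamk) \<bullet> (l - lamk))) has_derivative
       (\<lambda>v. (1/eta) * (v \<bullet> Phi xb) - s/2 * (v \<bullet> (lamb - lamk) + (lamb - lamk) \<bullet> v))) (at lamb)"
      using eta by (auto intro!: derivative_eq_intros)
  next
    fix t :: real assume t: "0 < t" "t < 1"
    define z where "z = lamb + t *\<^sub>R (lams - lamb)"
    have ez: "z = (1 - t) *\<^sub>R lamb + t *\<^sub>R lams" unfolding z_def by (simp add: algebra_simps)
    have zO: "z \<in> orthant" using lamb_max(1) ws(2) t unfolding ez orthant_def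
      by (auto intro!: add_nonneg_nonneg mult_nonneg_nonneg)
    have m: "scaledL f Phi xb z rho eta - s / 2 * (norm (z - lamk))\<^sup>2
         \<le> scaledL f Phi xb lamb rho eta - s / 2 * (norm (lamb - lamk))\<^sup>2"
      using lamb_max(2)[OF zO] unfolding s_def .
    then show "(1/eta) * ((lamb + t *\<^sub>R (lams - lamb)) \<bullet> Phi xb) - s/2 * ((lamb + t *\<^sub>R (lams - lamb) - lamk) \<bullet> (lamb + t *\<^sub>R (lams - lamb) - lamk))
        - ((1/eta) * (lamb \<bullet> Phi xb) - s/2 * ((lamb - lamk) \<bullet> (lamb - lamk))) \<le> t * 0"
      unfolding z_def scaledL_def power2_norm_eq_inner by (simp add: algebra_simps)
  qed
  have V: "rho * (f xb - f xs) + (xb - xs) \<bullet> ((1/eta) *\<^sub>R (transpose (DPhi xs) *v lams))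
           + (lamb - lams) \<bullet> ((1/eta) *\<^sub>R (- Phi xs)) \<ge> 0"
    using VI[OF xb_min(1) lamb_max(1)] .
  have C1: "0 \<le> lamb \<bullet> (Phi xs - Phi xb - D *v (xs - xb))"
    unfolding D_def using CV[OF lamb_max(1)] .
  have C2: "0 \<le> lams \<bullet> (Phi xb - Phi xs - DPhi xs *v (xb - xs))"
    using CV[OF ws(2)] .
  have T: "0 \<le> r*((xb-xs)\<bullet>(xk-xb)) - (1/eta)*((xb-xs) \<bullet> (transpose D *v (lamk-lamb))) + s*((lamb-lams)\<bullet>(lamk-lamb))"
  proof -
    define k where "k = 1/eta"
    have k: "k > 0" unfolding k_def using eta by simp
    define P1 where "P1 = lamk \<bullet> (D *v (xs - xb))"
    define P2 where "P2 = lamb \<bullet> (D *v (xs - xb))"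
    define P3 where "P3 = lams \<bullet> (DPhi xs *v (xb - xs))"
    define X1 where "X1 = (xb-xs)\<bullet>(xk-xb)"
    define Y1 where "Y1 = (lamb-lams)\<bullet>(lamk-lamb)"
    have i1: "(xs - xb) \<bullet> (xb - xk) = X1" "(xb - xk) \<bullet> (xs - xb) = X1"
      unfolding X1_def by (metis inner_minus_left minus_diff_eq inner_commute)+
    have i3: "(lams - lamb) \<bullet> (lamb - lamk) = Y1" "(lamb - lamk) \<bullet> (lams - lamb) = Y1"
      unfolding Y1_def by (metis inner_minus_left minus_diff_eq inner_commute)+
    have i4: "(lams - lamb) \<bullet> Phi xb = lams \<bullet> Phi xb - lamb \<bullet> Phi xb" by (simp add: inner_diff_left)
    have i5: "(xb - xs) \<bullet> ((1/eta) *\<^sub>R (transpose (DPhi xs) *v lams)) = k * P3"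
      unfolding k_def P3_def by (simp del: transpose_matrix_vector add: tr[symmetric] inner_commute)
    have i6: "(lamb - lams) \<bullet> ((1/eta) *\<^sub>R (- Phi xs)) = - (k * (lamb \<bullet> Phi xs)) + k * (lams \<bullet> Phi xs)"
      unfolding k_def by (simp add: inner_diff_left algebra_simps)
    have i7: "lamb \<bullet> (Phi xs - Phi xb - D *v (xs - xb)) = lamb \<bullet> Phi xs - lamb \<bullet> Phi xb - P2"
      unfolding P2_def by (simp add: inner_diff_right)
    have i8: "lams \<bullet> (Phi xb - Phi xs - DPhi xs *v (xb - xs)) = lams \<bullet> Phi xb - lams \<bullet> Phi xs - P3"
      unfolding P3_def by (simp add: inner_diff_right)
    have i9: "(xb-xs) \<bullet> (transpose D *v (lamk-lamb)) = - P1 + P2"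
    proof -
      have "(xb-xs) \<bullet> (transpose D *v (lamk-lamb)) = (D *v (xb - xs)) \<bullet> (lamk - lamb)"
        by (simp add: tr)
      also have "D *v (xb - xs) = - (D *v (xs - xb))"
        by (simp add: matrix_vector_mult_diff_distrib)
      finally show ?thesis unfolding P1_def P2_def by (simp add: inner_diff_left inner_commute)
    qed
    have A': "- (k * P1 + r * X1) \<le> rho * (f xs - f xb)"
      using A unfolding i1 P1_def[symmetric] k_def by simp
    have B': "k * (lams \<bullet> Phi xb) - k * (lamb \<bullet> Phi xb) - s * Y1 \<le> 0"
      using B unfolding i3 i4 k_def by (simp add: algebra_simps)
    have V': "rho * (f xb - f xs) + k * P3 + (- (k * (lamb \<bullet> Phi xs)) + k * (lams \<bullet> Phi xs)) \<ge> 0"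
      using V unfolding i5 i6 .
    have C: "0 \<le> k * ((lamb \<bullet> Phi xs - lamb \<bullet> Phi xb - P2) + (lams \<bullet> Phi xb - lams \<bullet> Phi xs - P3))"
      using C1 C2 k unfolding i7 i8 by simp
    show ?thesis unfolding i9 X1_def[symmetric] Y1_def[symmetric] k_def[symmetric]
      using A' B' V' C unfolding ring_distribs by linarith
  qed
  show ?thesis
    unfolding Let_def r_def[symmetric] s_def[symmetric] D_def[symmetric]
    by (rule alg[OF r eta T])
qed

end
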